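(* Let $P_1,P_2$ be distinct points of $\mathrm{PG}(6,q)$ and let $E_1,E_2,E_3$ be planes such that $E_i\cap E_j=P_1$ and $P_2\notin\langle E_i,E_j\rangle$ for all distinct $i,j\in\{1,2,3\}$. Let $\mathcal{S}$ be the set of all solids $S$ of $\mathrm{PG}(6,q)$ with $P_2\in S$ and $S\cap E_i\neq\emptyset$ for all $i\in\{1,2,3\}$. Then $|\mathcal{S}|\le 3q^6+6q^5+7q^4+4q^3+2q^2+q+1$.
   Context: Dimensions are projective (planes 2, solids 3); $\langle\cdot\rangle$ denotes the span. *)

theory Defs
  imports "HOL-Analysis.Analysis"
begin

text \<open>PG(6,q) is modelled as the lattice of linear subspaces of the vector space
  F^7 over a finite field F with q = CARD(F) elements.  A projective subspace of
  projective dimension k is a linear subspace of (vector-space) dimension k+1.\<close>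

definition proj_subspace :: "nat \<Rightarrow> ('a::field ^ 7) set \<Rightarrow> bool" where
  "proj_subspace k U \<longleftrightarrow> vec.subspace U \<and> vec.dim U = k + 1"

abbreviation pg_point :: "('a::field ^ 7) set \<Rightarrow> bool" where
  "pg_point U \<equiv> proj_subspace 0 U"

abbreviation pg_plane :: "('a::field ^ 7) set \<Rightarrow> bool" where
  "pg_plane U \<equiv> proj_subspace 2 U"

abbreviation pg_solid :: "('a::field ^ 7) set \<Rightarrow> bool" where
  "pg_solid U \<equiv> proj_subspace 3 U"

definition pg_join :: "('a::field ^ 7) set \<Rightarrow> ('a ^ 7) set \<Rightarrow> ('a ^ 7) set" where
  "pg_join U V = vec.span (U \<union> V)"

definition pg_meet :: "('a::field ^ 7) set \<Rightarrow> ('a ^ 7) set \<Rightarrow> bool" where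
  "pg_meet U V \<longleftrightarrow> U \<inter> V \<noteq> {0}"

end

theory Submission
  imports Defs
begin

lemma span_Un_subspaces:
  fixes U W :: "('a::field ^ 'n) set"
  assumes "vec.subspace U" "vec.subspace W"
  shows "vec.span (U \<union> W) = {x + y |x y. x \<in> U \<and> y \<in> W}"
  using assms by (simp add: vec.span_Un vec.span_eq_iff[THEN iffD2])

lemma dim_join:
  fixes U W :: "('a::field ^ 'n) set"
  assumes "vec.subspace U" "vec.subspace W"
  shows "vec.dim (vec.span (U \<union> W)) + vec.dim (U \<inter> W) = vec.dim U + vec.dim W"
  using vec.dim_sums_Int[OF assms] span_Un_subspaces[OF assms] by simp

lemma dim_join_le:
  fixes U W :: "('a::field ^ 'n) set"
  assumes "vec.subspace U" "vec.subspace W"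
  shows "vec.dim (vec.span (U \<union> W)) \<le> vec.dim U + vec.dim W"
  using dim_join[OF assms] by linarith

lemma dim_join_disj:
  fixes U W :: "('a::field ^ 'n) set"
  assumes "vec.subspace U" "vec.subspace W" "U \<inter> W = {0}"
  shows "vec.dim (vec.span (U \<union> W)) = vec.dim U + vec.dim W"
  using dim_join[OF assms(1,2)] assms(3) by simp

lemma point_span:
  fixes X :: "('a::field ^ 7) set"
  assumes "pg_point X" "v \<in> X" "v \<noteq> 0"
  shows "X = vec.span {v}"
proof -
  have s: "vec.subspace X" using assms(1) unfolding proj_subspace_def by simp
  have "vec.span {v} \<subseteq> X" using s assms(2) by (simp add: vec.span_minimal)
  moreover have "vec.dim (vec.span {v}) = vec.dim X" using assms unfolding proj_subspace_def by simp
  ultimately show ?thesis using s by (metis vec.subspace_dim_equal vec.subspace_span order_refl)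
qed

lemma point_of_vec:
  fixes v :: "'a::field ^ 7"
  assumes "v \<noteq> 0" shows "pg_point (vec.span {v})"
  using assms unfolding proj_subspace_def by simp

lemma point_inter:
  fixes X W :: "('a::field ^ 7) set"
  assumes "pg_point X" "vec.subspace W" "\<not> X \<subseteq> W"
  shows "X \<inter> W = {0}"
proof -
  have s: "vec.subspace X" using assms(1) unfolding proj_subspace_def by simp
  { fix v assume v: "v \<in> X" "v \<in> W" "v \<noteq> 0"
    then have "X = vec.span {v}" using point_span assms(1) by blast
    also have "\<dots> \<subseteq> W" using v assms(2) by (simp add: vec.span_minimal)
    finally have False using assms(3) by simp }
  then show ?thesis using s assms(2) vec.subspace_0 by blast
qed

lemma point_sub_eq:
  fixes X Y :: "('a::field ^ 7) set"
  assumes "pg_point X" "pg_point Y" "X \<subseteq> Y" shows "X = Y"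
  using assms unfolding proj_subspace_def by (metis vec.subspace_dim_equal order_refl)

lemma points_inter:
  fixes X Y :: "('a::field ^ 7) set"
  assumes "pg_point X" "pg_point Y" "X \<noteq> Y"
  shows "X \<inter> Y = {0}"
  using point_inter[OF assms(1)] point_sub_eq[OF assms(1,2)] assms unfolding proj_subspace_def by blast

lemma card_span_indep:
  fixes B :: "('a::{finite,field} ^ 'n) set"
  assumes "vec.independent B"
  shows "card (vec.span B) = CARD('a) ^ card B"
proof -
  have "finite B" using vec.finiteI_independent assms by blast
  then show ?thesis using assms
  proof (induction B rule: finite_induct)
    case empty then show ?case by simp
  next
    case (insert b B)
    have ind: "vec.independent B" using insert.prems vec.independent_mono by blast
    have nb: "b \<notin> vec.span B" using insert.prems insert.hyps vec.independent_insert by metis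
    let ?f = "\<lambda>(c::'a,u). c *s b + u"
    have eq: "vec.span (insert b B) = ?f ` (UNIV \<times> vec.span B)"
    proof
      show "vec.span (insert b B) \<subseteq> ?f ` (UNIV \<times> vec.span B)"
      proof
        fix x assume "x \<in> vec.span (insert b B)"
        then obtain k where k: "x - k *s b \<in> vec.span B" using vec.span_insert by blast
        then show "x \<in> ?f ` (UNIV \<times> vec.span B)"
          by (intro image_eqI[of _ _ "(k, x - k *s b)"]) auto
      qed
      show "?f ` (UNIV \<times> vec.span B) \<subseteq> vec.span (insert b B)"
        by (auto intro!: vec.span_add vec.span_scale simp: vec.span_base)
           (meson subsetD subset_insertI vec.span_mono)
    qed
    have inj: "inj_on ?f (UNIV \<times> vec.span B)"
    proof (rule inj_onI, clarsimp)
      fix c u c' u' assume u: "u \<in> vec.span B" "u' \<in> vec.span B" and e: "c *s b + u = c' *s b + u'"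
      have "(c - c') *s b = u' - u" using e by (simp add: algebra_simps vec.scale_left_diff_distrib)
      then have d: "(c - c') *s b \<in> vec.span B" using u vec.span_diff by metis
      show "c = c' \<and> u = u'"
      proof (cases "c = c'")
        case True then show ?thesis using e by simp
      next
        case False
        then have "inverse (c - c') *s ((c - c') *s b) \<in> vec.span B" using d vec.span_scale by blast
        moreover have "inverse (c - c') *s ((c - c') *s b) = b" using False by (metis vec.scale_scale left_inverse right_minus_eq vec.scale_one)
        ultimately have "b \<in> vec.span B" by simp
        then show ?thesis using nb by simp
      qed
    qed
    have "card (vec.span (insert b B)) = card ((UNIV::'a set) \<times> vec.span B)"
      unfolding eq using card_image[OF inj] by simp
    also have "\<dots> = CARD('a) * CARD('a) ^ card B" using insert ind by (simp add: card_cartesian_product)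
    finally show ?case using insert by simp
  qed
qed

lemma card_subspace:
  fixes U :: "('a::{finite,field} ^ 'n) set"
  assumes "vec.subspace U"
  shows "card U = CARD('a) ^ vec.dim U"
proof -
  obtain B where B: "B \<subseteq> U" "vec.independent B" "U \<subseteq> vec.span B" "card B = vec.dim U"
    using vec.basis_exists by blast
  have "vec.span B = U" using B assms by (simp add: vec.span_subspace)
  then show ?thesis using card_span_indep[OF B(2)] B(4) by simp
qed

definition pts :: "('a::field ^ 7) set \<Rightarrow> ('a ^ 7) set set" where
  "pts U = {X. pg_point X \<and> X \<subseteq> U}"

definition lns :: "('a::field ^ 7) set \<Rightarrow> ('a ^ 7) set set" where
  "lns U = {W. vec.subspace W \<and> vec.dim W = 2 \<and> W \<subseteq> U}"

definition prs :: "'b set \<Rightarrow> ('b \<times> 'b) set" where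
  "prs A = {(X,Y). X \<in> A \<and> Y \<in> A \<and> X \<noteq> Y}"

lemma card_ge2: "2 \<le> CARD('a::{finite,field})"
proof -
  have "card {0::'a,1} \<le> CARD('a)" by (rule card_mono) auto
  then show ?thesis by simp
qed

lemma geom_sum_nat:
  fixes q :: nat assumes "1 \<le> q"
  shows "(\<Sum>i<k. q^i) * (q - 1) + 1 = q ^ k"
proof (induction k)
  case 0 then show ?case by simp
next
  case (Suc k)
  have "(\<Sum>i<Suc k. q^i) * (q - 1) + 1 = ((\<Sum>i<k. q^i) * (q - 1) + 1) + q^k * (q - 1)"
    by (simp add: algebra_simps)
  also have "\<dots> = q^k * (1 + (q - 1))" using Suc by (simp add: algebra_simps)
  also have "\<dots> = q ^ Suc k" using assms by simp
  finally show ?case .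
qed

lemma pts_card_eq:
  fixes U :: "('a::{finite,field} ^ 7) set"
  assumes "vec.subspace U"
  shows "card (pts U) * (CARD('a) - 1) + 1 = CARD('a) ^ vec.dim U"
proof -
  let ?q = "CARD('a)"
  have un: "U - {0} = (\<Union>X\<in>pts U. X - {0})"
  proof
    show "U - {0} \<subseteq> (\<Union>X\<in>pts U. X - {0})"
    proof
      fix u assume u: "u \<in> U - {0}"
      have "vec.span {u} \<subseteq> U" using u assms by (simp add: vec.span_minimal)
      then have "vec.span {u} \<in> pts U" using point_of_vec u unfolding pts_def by auto
      moreover have "u \<in> vec.span {u} - {0}" using u vec.span_base[of u "{u}"] by simp
      ultimately show "u \<in> (\<Union>X\<in>pts U. X - {0})" by (rule UN_I)
    qed
    show "(\<Union>X\<in>pts U. X - {0}) \<subseteq> U - {0}" unfolding pts_def by auto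
  qed
  have "card (U - {0}) = (\<Sum>X\<in>pts U. card (X - {0}))"
    unfolding un
  proof (rule card_UN_disjoint)
    show "\<forall>i\<in>pts U. \<forall>j\<in>pts U. i \<noteq> j \<longrightarrow> (i - {0}) \<inter> (j - {0}) = {}"
    proof (intro ballI impI)
      fix X Y assume XY: "X \<in> pts U" "Y \<in> pts U" "X \<noteq> Y"
      have px: "pg_point X" and py: "pg_point Y" using XY(1,2) unfolding pts_def by blast+
      have "X \<inter> Y = {0}" using points_inter[OF px py XY(3)] .
      then show "(X - {0}) \<inter> (Y - {0}) = {}" by auto
    qed
  qed simp_all
  also have "\<dots> = (\<Sum>X\<in>pts U. ?q - 1)"
  proof (rule sum.cong[OF refl])
    fix X assume "X \<in> pts U"
    then have X: "vec.subspace X" "vec.dim X = 1" unfolding pts_def proj_subspace_def by auto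
    then have "card X = ?q" using card_subspace[OF X(1)] X(2) by simp
    moreover have "0 \<in> X" using X vec.subspace_0 by blast
    ultimately show "card (X - {0}) = ?q - 1" by simp
  qed
  also have "\<dots> = card (pts U) * (?q - 1)" by simp
  finally have e: "card (U - {0}) = card (pts U) * (?q - 1)" .
  have "0 \<in> U" using assms vec.subspace_0 by blast
  then have "card (U - {0}) + 1 = card U" by (metis card_Suc_Diff1 finite Suc_eq_plus1)
  then show ?thesis using e card_subspace[OF assms] by linarith
qed

lemma pts_card:
  fixes U :: "('a::{finite,field} ^ 7) set"
  assumes "vec.subspace U"
  shows "card (pts U) = (\<Sum>i<vec.dim U. CARD('a)^i)"
proof -
  have q: "1 \<le> CARD('a)" using card_ge2[where 'a='a] by simp
  have "card (pts U) * (CARD('a) - 1) = (\<Sum>i<vec.dim U. CARD('a)^i) * (CARD('a) - 1)"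
    using pts_card_eq[OF assms] geom_sum_nat[OF q, of "vec.dim U"] by linarith
  moreover have "CARD('a) - 1 > 0" using card_ge2[where 'a='a] by simp
  ultimately show ?thesis by simp
qed

lemma prs_card:
  assumes "finite A" shows "card (prs A) + card A = card A * card A"
proof -
  have "A \<times> A = prs A \<union> (\<lambda>x. (x,x)) ` A" unfolding prs_def by auto
  moreover have "prs A \<inter> (\<lambda>x. (x,x)) ` A = {}" unfolding prs_def by auto
  moreover have "card ((\<lambda>x. (x,x)) ` A) = card A" by (rule card_image) (auto simp: inj_on_def)
  moreover have "finite (prs A)"
    by (rule finite_subset[of _ "A \<times> A"]) (use assms in \<open>auto simp: prs_def\<close>)
  ultimately show ?thesis using assms
    by (metis card_Un_disjoint card_cartesian_product finite_imageI)
qed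

lemma join_points_line:
  fixes X Y :: "('a::field ^ 7) set"
  assumes "pg_point X" "pg_point Y" "X \<noteq> Y"
  shows "vec.subspace (vec.span (X \<union> Y)) \<and> vec.dim (vec.span (X \<union> Y)) = 2"
  using dim_join_disj[of X Y] points_inter[OF assms] assms unfolding proj_subspace_def by simp

lemma lns_card_eq:
  fixes U :: "('a::{finite,field} ^ 7) set"
  assumes "vec.subspace U"
  shows "card (lns U) * ((CARD('a) + 1) * CARD('a)) + card (pts U) = card (pts U) * card (pts U)"
proof -
  let ?q = "CARD('a)"
  have un: "prs (pts U) = (\<Union>W\<in>lns U. prs (pts W))"
  proof
    show "prs (pts U) \<subseteq> (\<Union>W\<in>lns U. prs (pts W))"
    proof (clarify)
      fix X Y assume "(X,Y) \<in> prs (pts U)"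
      then have XY: "pg_point X" "pg_point Y" "X \<noteq> Y" "X \<subseteq> U" "Y \<subseteq> U" unfolding prs_def pts_def by auto
      let ?W = "vec.span (X \<union> Y)"
      have "?W \<subseteq> U" by (rule vec.span_minimal) (use XY assms in auto)
      then have "?W \<in> lns U" using join_points_line[OF XY(1-3)]
        unfolding lns_def by auto
      moreover have "(X,Y) \<in> prs (pts ?W)" using XY vec.span_superset[of "X \<union> Y"]
        unfolding prs_def pts_def by auto
      ultimately show "(X,Y) \<in> (\<Union>W\<in>lns U. prs (pts W))" by blast
    qed
    show "(\<Union>W\<in>lns U. prs (pts W)) \<subseteq> prs (pts U)" unfolding lns_def prs_def pts_def by auto
  qed
  have eqW: "vec.span (X \<union> Y) = W" if "W \<in> lns U" "(X,Y) \<in> prs (pts W)" for W X Y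
  proof -
    have XY: "pg_point X" "pg_point Y" "X \<noteq> Y" "X \<subseteq> W" "Y \<subseteq> W" "vec.subspace W" "vec.dim W = 2"
      using that unfolding prs_def pts_def lns_def by auto
    have "vec.span (X \<union> Y) \<subseteq> W" using XY by (simp add: vec.span_minimal)
    then show ?thesis using join_points_line[OF XY(1-3)] XY(6,7) vec.subspace_dim_equal by (metis order_refl)
  qed
  have "card (prs (pts U)) = (\<Sum>W\<in>lns U. card (prs (pts W)))"
    unfolding un
  proof (rule card_UN_disjoint)
    show "\<forall>i\<in>lns U. \<forall>j\<in>lns U. i \<noteq> j \<longrightarrow> prs (pts i) \<inter> prs (pts j) = {}"
    proof (intro ballI impI)
      fix i j assume ij: "i \<in> lns U" "j \<in> lns U" "i \<noteq> j"
      show "prs (pts i) \<inter> prs (pts j) = {}"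
      proof (rule ccontr)
        assume "prs (pts i) \<inter> prs (pts j) \<noteq> {}"
        then obtain X Y where "(X,Y) \<in> prs (pts i)" "(X,Y) \<in> prs (pts j)" by auto
        then show False using eqW[OF ij(1)] eqW[OF ij(2)] ij(3) by metis
      qed
    qed
  qed auto
  also have "\<dots> = (\<Sum>W\<in>lns U. (?q + 1) * ?q)"
  proof (rule sum.cong[OF refl])
    fix W assume "W \<in> lns U"
    then have W: "vec.subspace W" "vec.dim W = 2" unfolding lns_def by auto
    have "card (pts W) = ?q + 1" using pts_card[OF W(1)] W(2) by (simp add: numeral_2_eq_2)
    then show "card (prs (pts W)) = (?q + 1) * ?q" using prs_card[of "pts W"] by (simp add: algebra_simps)
  qed
  also have "\<dots> = card (lns U) * ((?q + 1) * ?q)" by simp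
  finally show ?thesis using prs_card[of "pts U"] by simp
qed

lemma lns_card5:
  fixes U :: "('a::{finite,field} ^ 7) set"
  assumes "vec.subspace U" "vec.dim U = 5"
  shows "card (lns U) = CARD('a)^6 + CARD('a)^5 + 2*CARD('a)^4 + 2*CARD('a)^3 + 2*CARD('a)^2 + CARD('a) + 1"
proof -
  let ?q = "CARD('a)"
  let ?N1 = "?q^6 + ?q^5 + 2*?q^4 + 2*?q^3 + 2*?q^2 + ?q + 1"
  have N: "card (pts U) = 1 + ?q + ?q^2 + ?q^3 + ?q^4" using pts_card[OF assms(1)] assms(2)
    by (simp add: numeral_eq_Suc power_Suc)
  have id: "?N1 * ((?q + 1) * ?q) + (1 + ?q + ?q^2 + ?q^3 + ?q^4) = (1 + ?q + ?q^2 + ?q^3 + ?q^4) * (1 + ?q + ?q^2 + ?q^3 + ?q^4)"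
    by algebra
  have "card (lns U) * ((?q + 1) * ?q) + (1 + ?q + ?q^2 + ?q^3 + ?q^4) = (1 + ?q + ?q^2 + ?q^3 + ?q^4) * (1 + ?q + ?q^2 + ?q^3 + ?q^4)"
    using lns_card_eq[OF assms(1)] unfolding N .
  then have "card (lns U) * ((?q + 1) * ?q) = ?N1 * ((?q + 1) * ?q)"
    using id by linarith
  moreover have "(?q + 1) * ?q \<noteq> 0" using card_ge2[where 'a='a] by simp
  ultimately show ?thesis using mult_right_cancel by blast
qed

lemma complement_exists:
  fixes T :: "('a::field ^ 7) set"
  assumes "vec.subspace T"
  shows "\<exists>C. vec.subspace C \<and> T \<inter> C = {0} \<and> vec.span (T \<union> C) = UNIV"
proof -
  obtain B where B: "B \<subseteq> T" "vec.independent B" "T \<subseteq> vec.span B" "card B = vec.dim T"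
    using vec.basis_exists by blast
  let ?B' = "vec.extend_basis B"
  have sub: "B \<subseteq> ?B'" "vec.independent ?B'" "vec.span ?B' = UNIV"
    using vec.extend_basis_superset vec.independent_extend_basis vec.span_extend_basis B(2) by auto
  define C where "C = vec.span (?B' - B)"
  have fin: "finite ?B'" using vec.finiteI_independent sub(2) .
  have cB': "card ?B' = 7"
    using vec.dim_eq_card_independent[OF sub(2)] vec.dim_span[of ?B'] sub(3) by (simp add: card_cart_basis)
  have sC: "vec.subspace C" unfolding C_def by simp
  have spanU: "vec.span (T \<union> C) = UNIV"
  proof -
    have "?B' \<subseteq> T \<union> C" using B(1) vec.span_superset[of "?B' - B"] unfolding C_def by blast
    then have "vec.span ?B' \<subseteq> vec.span (T \<union> C)" by (rule vec.span_mono)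
    then show ?thesis using sub(3) by auto
  qed
  have "vec.dim C \<le> card (?B' - B)" unfolding C_def
    by (rule vec.dim_le_card) (use fin in auto)
  moreover have "card (?B' - B) = 7 - card B" using cB' sub(1) fin
    by (simp add: card_Diff_subset finite_subset)
  moreover have "card B \<le> 7" using cB' sub(1) fin card_mono by metis
  moreover have "vec.dim (vec.span (T \<union> C)) + vec.dim (T \<inter> C) = vec.dim T + vec.dim C"
    using dim_join[OF assms sC] .
  moreover have "vec.dim (vec.span (T \<union> C)) = 7" using spanU by (simp add: card_cart_basis)
  ultimately have "vec.dim (T \<inter> C) = 0" using B(4) by linarith
  then have "T \<inter> C = {0}" using vec.subspace_0[OF assms] vec.subspace_0[OF sC] by auto
  then show ?thesis using sC spanU by blast
qed

lemma complement_decomp: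
  fixes T C S :: "('a::field ^ 7) set"
  assumes "vec.subspace T" "vec.subspace C" "T \<inter> C = {0}" "vec.span (T \<union> C) = UNIV"
    and "vec.subspace S" "T \<subseteq> S"
  shows "S = vec.span (T \<union> (S \<inter> C))" "vec.dim T + vec.dim (S \<inter> C) = vec.dim S"
proof -
  have sSC: "vec.subspace (S \<inter> C)" using assms by (simp add: vec.subspace_inter)
  show e: "S = vec.span (T \<union> (S \<inter> C))"
  proof
    show "S \<subseteq> vec.span (T \<union> (S \<inter> C))"
    proof
      fix s assume s: "s \<in> S"
      have "s \<in> vec.span (T \<union> C)" using assms(4) by simp
      then obtain t c where tc: "s = t + c" "t \<in> T" "c \<in> C" using span_Un_subspaces[OF assms(1,2)] by blast
      have "c = s - t" using tc by simp
      then have "c \<in> S" using s tc(2) assms(5,6) vec.subspace_diff by blast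
      then have "t \<in> vec.span (T \<union> (S \<inter> C))" "c \<in> vec.span (T \<union> (S \<inter> C))"
        using tc by (auto intro: vec.span_base)
      then show "s \<in> vec.span (T \<union> (S \<inter> C))" using tc(1) vec.span_add by metis
    qed
    show "vec.span (T \<union> (S \<inter> C)) \<subseteq> S" by (rule vec.span_minimal) (use assms in auto)
  qed
  have "T \<inter> (S \<inter> C) = {0}" using assms(3) vec.subspace_0[OF sSC] by auto
  then have "vec.dim (vec.span (T \<union> (S \<inter> C))) = vec.dim T + vec.dim (S \<inter> C)"
    using dim_join_disj[OF assms(1) sSC] by simp
  then show "vec.dim T + vec.dim (S \<inter> C) = vec.dim S" using e by simp
qed

lemma pt_sub: "pg_point X \<Longrightarrow> vec.subspace X"
  unfolding proj_subspace_def by simp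

lemma pt_dim: "pg_point X \<Longrightarrow> vec.dim X = 1"
  unfolding proj_subspace_def by simp

lemma pt_inter_other:
  fixes P1 B Ei Ej :: "('a::field ^ 7) set"
  assumes "pg_point P1" "pg_point B" "B \<subseteq> Ei" "B \<noteq> P1" "Ei \<inter> Ej = P1" "vec.subspace Ej"
  shows "B \<inter> Ej = {0}"
proof (rule point_inter[OF assms(2,6)])
  show "\<not> B \<subseteq> Ej"
  proof
    assume "B \<subseteq> Ej"
    then have "B \<subseteq> Ei \<inter> Ej" using assms(3) by (rule Int_greatest[rotated])
    then have "B \<subseteq> P1" unfolding assms(5) .
    then show False using point_sub_eq[OF assms(2,1)] assms(4) by simp
  qed
qed

lemma G1:
  fixes P1 P2 Ei Ej B C :: "('a::field ^ 7) set"
  assumes "pg_point P1" "pg_point P2" "vec.subspace Ei" "vec.subspace Ej" "Ei \<inter> Ej = P1"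
    "P2 \<inter> vec.span (Ei \<union> Ej) = {0}" "pg_point B" "B \<subseteq> Ei" "B \<noteq> P1"
    "pg_point C" "C \<subseteq> Ej" "C \<noteq> P1"
  shows "vec.dim (vec.span (P2 \<union> vec.span (B \<union> C))) = 3"
proof -
  have BEj: "B \<inter> Ej = {0}" by (rule pt_inter_other[OF assms(1,7,8,9,5,4)])
  have "0 \<in> B" "0 \<in> C" using vec.subspace_0[OF pt_sub[OF assms(7)]] vec.subspace_0[OF pt_sub[OF assms(10)]] .
  then have "B \<inter> C = {0}" using BEj assms(11) by auto
  then have d2: "vec.dim (vec.span (B \<union> C)) = 2"
    using dim_join_disj[OF pt_sub[OF assms(7)] pt_sub[OF assms(10)]] pt_dim[OF assms(7)] pt_dim[OF assms(10)] by simp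
  have "vec.span (B \<union> C) \<subseteq> vec.span (Ei \<union> Ej)" using assms(8,11) by (intro vec.span_mono) blast
  then have "P2 \<inter> vec.span (B \<union> C) = {0}" using assms(6) vec.subspace_0[OF pt_sub[OF assms(2)]] vec.span_zero by auto
  then show ?thesis using dim_join_disj[OF pt_sub[OF assms(2)] vec.subspace_span] d2 pt_dim[OF assms(2)] by simp
qed

lemma sup_l: "A \<subseteq> vec.span (A \<union> B)"
  by (meson Un_upper1 vec.span_superset subset_trans)

lemma sup_r: "B \<subseteq> vec.span (A \<union> B)"
  by (meson Un_upper2 vec.span_superset subset_trans)

lemma span_Un_le:
  assumes "A \<subseteq> vec.span C" "B \<subseteq> vec.span C"
  shows "vec.span (A \<union> B) \<subseteq> vec.span C"
  using assms by (intro vec.span_minimal) auto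

lemma Dinj:
  fixes P1 P2 E1 E2 E3 B1 B2 B2' B3 :: "('a::field ^ 7) set"
  assumes P: "pg_point P1" "pg_point P2"
    and E: "vec.subspace E1" "vec.subspace E2" "vec.subspace E3"
    and I: "E1 \<inter> E2 = P1" "E1 \<inter> E3 = P1"
    and J: "P2 \<inter> vec.span (E1 \<union> E2) = {0}" "P2 \<inter> vec.span (E1 \<union> E3) = {0}"
    and B1: "pg_point B1" "B1 \<subseteq> E1" "B1 \<noteq> P1"
    and B2: "pg_point B2" "B2 \<subseteq> E2" "B2 \<noteq> P1"
    and B2': "pg_point B2'" "B2' \<subseteq> E2" "B2' \<noteq> P1"
    and B3: "pg_point B3" "B3 \<subseteq> E3" "B3 \<noteq> P1"
    and deg: "B3 \<subseteq> vec.span (P2 \<union> vec.span (B1 \<union> B2))" "B3 \<subseteq> vec.span (P2 \<union> vec.span (B1 \<union> B2'))"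
  shows "B2 = B2'"
proof (rule ccontr)
  assume ne: "B2 \<noteq> B2'"
  let ?T = "vec.span (P2 \<union> vec.span (B1 \<union> B2))"
  let ?T' = "vec.span (P2 \<union> vec.span (B1 \<union> B2'))"
  let ?T13 = "vec.span (P2 \<union> vec.span (B1 \<union> B3))"
  have d13: "vec.dim ?T13 = 3" by (rule G1[OF P E(1,3) I(2) J(2) B1 B3])
  have d12: "vec.dim ?T = 3" by (rule G1[OF P E(1,2) I(1) J(1) B1 B2])
  have d12': "vec.dim ?T' = 3" by (rule G1[OF P E(1,2) I(1) J(1) B1 B2'])
  have P2T: "P2 \<subseteq> ?T" by (rule sup_l)
  have B1T: "B1 \<subseteq> ?T" by (rule subset_trans[OF sup_l sup_r])
  have B2T: "B2 \<subseteq> ?T" by (rule subset_trans[OF sup_r sup_r])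
  have P2T': "P2 \<subseteq> ?T'" by (rule sup_l)
  have B1T': "B1 \<subseteq> ?T'" by (rule subset_trans[OF sup_l sup_r])
  have sub: "?T13 \<subseteq> ?T"
    by (rule span_Un_le[OF P2T span_Un_le[OF B1T deg(1)]])
  have sub': "?T13 \<subseteq> ?T'"
    by (rule span_Un_le[OF P2T' span_Un_le[OF B1T' deg(2)]])
  have "?T13 = ?T" using vec.subspace_dim_equal[OF vec.subspace_span vec.subspace_span sub] d13 d12 by simp
  moreover have "?T13 = ?T'" using vec.subspace_dim_equal[OF vec.subspace_span vec.subspace_span sub'] d13 d12' by simp
  ultimately have TT: "?T = ?T'" by simp
  have B2'T: "B2' \<subseteq> ?T" unfolding TT by (rule subset_trans[OF sup_r sup_r])
  let ?V = "vec.span (B2 \<union> B2')"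
  have "B2 \<inter> B2' = {0}" by (rule points_inter[OF B2(1) B2'(1) ne])
  then have dV: "vec.dim ?V = 2"
    using dim_join_disj[OF pt_sub[OF B2(1)] pt_sub[OF B2'(1)]] pt_dim[OF B2(1)] pt_dim[OF B2'(1)] by simp
  have VE2: "?V \<subseteq> E2" using B2(2) B2'(2) E(2) by (intro vec.span_minimal) auto
  have "B1 \<inter> E2 = {0}" by (rule pt_inter_other[OF P(1) B1(1,2,3) I(1) E(2)])
  then have "B1 \<inter> ?V = {0}" using VE2 vec.subspace_0[OF pt_sub[OF B1(1)]] vec.span_zero by auto
  then have dR: "vec.dim (vec.span (B1 \<union> ?V)) = 3"
    using dim_join_disj[OF pt_sub[OF B1(1)] vec.subspace_span] dV pt_dim[OF B1(1)] by simp
  have "B1 \<union> ?V \<subseteq> E1 \<union> E2" using B1(2) VE2 by auto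
  then have "vec.span (B1 \<union> ?V) \<subseteq> vec.span (E1 \<union> E2)" by (rule vec.span_mono)
  then have "P2 \<inter> vec.span (B1 \<union> ?V) = {0}" using J(1) vec.subspace_0[OF pt_sub[OF P(2)]] vec.span_zero by auto
  then have d4: "vec.dim (vec.span (P2 \<union> vec.span (B1 \<union> ?V))) = 4"
    using dim_join_disj[OF pt_sub[OF P(2)] vec.subspace_span] dR pt_dim[OF P(2)] by simp
  have VT: "?V \<subseteq> ?T" by (rule span_Un_le[OF B2T B2'T])
  have "vec.span (P2 \<union> vec.span (B1 \<union> ?V)) \<subseteq> ?T"
    by (rule span_Un_le[OF P2T span_Un_le[OF B1T VT]])
  then have "vec.dim (vec.span (P2 \<union> vec.span (B1 \<union> ?V))) \<le> vec.dim ?T" by (rule vec.dim_subset)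
  then show False using d4 d12 by simp
qed

lemma Wbound:
  fixes P1 P2 E1 E2 B3 :: "('a::field ^ 7) set"
  assumes P: "pg_point P1" "pg_point P2"
    and E: "vec.subspace E1" "vec.subspace E2" "vec.dim E1 = 3" "vec.dim E2 = 3"
    and I: "E1 \<inter> E2 = P1"
    and J: "P2 \<inter> vec.span (E1 \<union> E2) = {0}"
    and B3: "pg_point B3"
  shows "vec.dim (E1 \<inter> vec.span (P2 \<union> vec.span (B3 \<union> E2))) \<le> 2"
    "P1 \<subseteq> E1 \<inter> vec.span (P2 \<union> vec.span (B3 \<union> E2))"
proof -
  let ?Z = "vec.span (P2 \<union> vec.span (B3 \<union> E2))"
  have dZ: "vec.dim ?Z \<le> 5"
    using dim_join_le[OF pt_sub[OF P(2)] vec.subspace_span, of "B3 \<union> E2"]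
      dim_join_le[OF pt_sub[OF B3] E(2)] pt_dim[OF P(2)] pt_dim[OF B3] E(4) by simp
  have "vec.dim (vec.span (E1 \<union> E2)) + vec.dim P1 = 6" using dim_join[OF E(1,2)] I E(3,4) by simp
  then have d5: "vec.dim (vec.span (E1 \<union> E2)) = 5" using pt_dim[OF P(1)] by simp
  have d6: "vec.dim (vec.span (P2 \<union> vec.span (E1 \<union> E2))) = 6"
    using dim_join_disj[OF pt_sub[OF P(2)] vec.subspace_span J] d5 pt_dim[OF P(2)] by simp
  have E2Z: "E2 \<subseteq> ?Z" by (rule subset_trans[OF sup_r sup_r])
  have P2Z: "P2 \<subseteq> ?Z" by (rule sup_l)
  have sub6: "vec.span (P2 \<union> vec.span (E1 \<union> E2)) \<subseteq> vec.span (E1 \<union> ?Z)"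
    by (rule span_Un_le[OF subset_trans[OF P2Z sup_r] span_Un_le[OF sup_l subset_trans[OF E2Z sup_r]]])
  have "6 \<le> vec.dim (vec.span (E1 \<union> ?Z))" using vec.dim_subset[OF sub6] d6 by simp
  then show "vec.dim (E1 \<inter> ?Z) \<le> 2" using dim_join[OF E(1) vec.subspace_span, of "P2 \<union> vec.span (B3 \<union> E2)"] dZ E(3) by linarith
  have P1E1: "P1 \<subseteq> E1" using I by (metis Int_lower1)
  have P1E2: "P1 \<subseteq> E2" using I by (metis Int_lower2)
  show "P1 \<subseteq> E1 \<inter> ?Z" by (rule Int_greatest[OF P1E1 subset_trans[OF P1E2 E2Z]])
qed

lemma getpt:
  fixes S Ei P1 :: "('a::field ^ 7) set"
  assumes "vec.subspace S" "vec.subspace Ei" "pg_meet S Ei" "\<not> P1 \<subseteq> S"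
  shows "\<exists>B. pg_point B \<and> B \<subseteq> S \<and> B \<subseteq> Ei \<and> B \<noteq> P1"
proof -
  have "S \<inter> Ei \<noteq> {0}" using assms(3) unfolding pg_meet_def .
  moreover have "0 \<in> S \<inter> Ei" using vec.subspace_0[OF assms(1)] vec.subspace_0[OF assms(2)] by simp
  ultimately obtain v where v: "v \<in> S" "v \<in> Ei" "v \<noteq> 0" by auto
  have a: "vec.span {v} \<subseteq> S" using v(1) assms(1) by (simp add: vec.span_minimal)
  have b: "vec.span {v} \<subseteq> Ei" using v(2) assms(2) by (simp add: vec.span_minimal)
  have c: "vec.span {v} \<noteq> P1" using a assms(4) by auto
  show ?thesis using point_of_vec[OF v(3)] a b c by blast
qed

lemma nondeg_eq:
  fixes S T B :: "('a::field ^ 7) set"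
  assumes "vec.subspace S" "vec.dim S = 4" "vec.subspace T" "vec.dim T = 3" "T \<subseteq> S"
    "pg_point B" "B \<subseteq> S" "\<not> B \<subseteq> T"
  shows "vec.span (T \<union> B) = S"
proof -
  have "B \<inter> T = {0}" by (rule point_inter[OF assms(6,3,8)])
  then have "T \<inter> B = {0}" by (simp add: Int_commute)
  then have d: "vec.dim (vec.span (T \<union> B)) = 4"
    using dim_join_disj[OF assms(3) pt_sub[OF assms(6)]] assms(4) pt_dim[OF assms(6)] by simp
  have "vec.span (T \<union> B) \<subseteq> S" using assms(1,5,7) by (intro vec.span_minimal) auto
  then show ?thesis using vec.subspace_dim_equal[OF vec.subspace_span assms(1)] d assms(2) by simp
qed

lemma Dimg:
  fixes P1 P2 E2 E3 B1 B2 B3 :: "('a::field ^ 7) set"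
  assumes P: "pg_point P1" "pg_point P2"
    and E: "vec.subspace E2" "vec.subspace E3"
    and I: "E2 \<inter> E3 = P1"
    and J: "P2 \<inter> vec.span (E2 \<union> E3) = {0}"
    and B2: "pg_point B2" "B2 \<subseteq> E2" "B2 \<noteq> P1"
    and B3: "pg_point B3" "B3 \<subseteq> E3" "B3 \<noteq> P1"
    and d: "vec.dim (vec.span (P2 \<union> vec.span (B1 \<union> B2))) = 3"
    and deg: "B3 \<subseteq> vec.span (P2 \<union> vec.span (B1 \<union> B2))"
  shows "B1 \<subseteq> vec.span (P2 \<union> vec.span (B3 \<union> E2))"
proof -
  let ?T = "vec.span (P2 \<union> vec.span (B1 \<union> B2))"
  let ?T23 = "vec.span (P2 \<union> vec.span (B2 \<union> B3))"
  have d23: "vec.dim ?T23 = 3" by (rule G1[OF P E I J B2 B3])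
  have P2T: "P2 \<subseteq> ?T" by (rule sup_l)
  have B2T: "B2 \<subseteq> ?T" by (rule subset_trans[OF sup_r sup_r])
  have sub: "?T23 \<subseteq> ?T" by (rule span_Un_le[OF P2T span_Un_le[OF B2T deg]])
  have eq: "?T23 = ?T" using vec.subspace_dim_equal[OF vec.subspace_span vec.subspace_span sub] d23 d by simp
  have B1T: "B1 \<subseteq> ?T" by (rule subset_trans[OF sup_l sup_r])
  have "B2 \<union> B3 \<subseteq> B3 \<union> E2" using B2(2) by auto
  then have "vec.span (B2 \<union> B3) \<subseteq> vec.span (B3 \<union> E2)" by (rule vec.span_mono)
  then have "P2 \<union> vec.span (B2 \<union> B3) \<subseteq> P2 \<union> vec.span (B3 \<union> E2)" by auto
  then have "?T23 \<subseteq> vec.span (P2 \<union> vec.span (B3 \<union> E2))" by (rule vec.span_mono)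
  then show ?thesis using B1T eq by simp
qed

lemma cSome: "card (Some ` A) = card A"
  by (rule card_image) (simp add: inj_on_def)

theorem lemma4p2:
  fixes P1 P2 :: "('a::{finite,field} ^ 7) set"
    and E :: "nat \<Rightarrow> ('a ^ 7) set"
  assumes "pg_point P1" and "pg_point P2" and "P1 \<noteq> P2"
    and "\<And>i. i \<in> {1,2,3} \<Longrightarrow> pg_plane (E i)"
    and "\<And>i j. i \<in> {1,2,3} \<Longrightarrow> j \<in> {1,2,3} \<Longrightarrow> i \<noteq> j \<Longrightarrow> E i \<inter> E j = P1"
    and "\<And>i j. i \<in> {1,2,3} \<Longrightarrow> j \<in> {1,2,3} \<Longrightarrow> i \<noteq> j \<Longrightarrow> \<not> P2 \<subseteq> pg_join (E i) (E j)"
  shows "card {S. pg_solid S \<and> P2 \<subseteq> S \<and> (\<forall>i\<in>{1,2,3}. pg_meet S (E i))}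
     \<le> 3 * CARD('a)^6 + 6 * CARD('a)^5 + 7 * CARD('a)^4 + 4 * CARD('a)^3
        + 2 * CARD('a)^2 + CARD('a) + 1"
proof -
  let ?q = "CARD('a)"
  have sE: "vec.subspace (E i)" "vec.dim (E i) = 3" if "i \<in> {1,2,3}" for i
    using assms(4)[OF that] unfolding proj_subspace_def by auto
  have sE1: "vec.subspace (E 1)" "vec.dim (E 1) = 3" using sE[of 1] by auto
  have sE2: "vec.subspace (E 2)" "vec.dim (E 2) = 3" using sE[of 2] by auto
  have sE3: "vec.subspace (E 3)" "vec.dim (E 3) = 3" using sE[of 3] by auto
  have I12: "E 1 \<inter> E 2 = P1" using assms(5)[of 1 2] by simp
  have I13: "E 1 \<inter> E 3 = P1" using assms(5)[of 1 3] by simp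
  have I23: "E 2 \<inter> E 3 = P1" using assms(5)[of 2 3] by simp
  have J: "P2 \<inter> vec.span (E i \<union> E j) = {0}" if "i \<in> {1,2,3}" "j \<in> {1,2,3}" "i \<noteq> j" for i j
    by (rule point_inter[OF assms(2) vec.subspace_span]) (use assms(6)[OF that] in \<open>simp add: pg_join_def\<close>)
  have J12: "P2 \<inter> vec.span (E 1 \<union> E 2) = {0}" using J[of 1 2] by simp
  have J13: "P2 \<inter> vec.span (E 1 \<union> E 3) = {0}" using J[of 1 3] by simp
  have J23: "P2 \<inter> vec.span (E 2 \<union> E 3) = {0}" using J[of 2 3] by simp
  have P1E1: "P1 \<subseteq> E 1" using I12 by (metis Int_lower1)
  have P1E2: "P1 \<subseteq> E 2" using I12 by (metis Int_lower2)
  have P1E3: "P1 \<subseteq> E 3" using I13 by (metis Int_lower2)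

  define Pts where "Pts = (\<lambda>i::nat. {X. pg_point X \<and> X \<subseteq> E i \<and> X \<noteq> P1})"
  define T where "T = (\<lambda>B1 B2::('a^7) set. vec.span (P2 \<union> vec.span (B1 \<union> B2)))"
  define deg where "deg = (\<lambda>t::('a^7) set \<times> ('a^7) set \<times> ('a^7) set. snd (snd t) \<subseteq> T (fst t) (fst (snd t)))"
  define Cc where "Cc = (\<lambda>t::('a^7) set \<times> ('a^7) set \<times> ('a^7) set. SOME C. vec.subspace C \<and>
      T (fst t) (fst (snd t)) \<inter> C = {0} \<and> vec.span (T (fst t) (fst (snd t)) \<union> C) = UNIV)"
  define Trip where "Trip = Pts 1 \<times> Pts 2 \<times> Pts 3"
  define Tgt where "Tgt = Sigma Trip (\<lambda>t. if deg t then Some ` pts (Cc t) else {None})"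
  define g where "g = (\<lambda>p::(('a^7) set \<times> ('a^7) set \<times> ('a^7) set) \<times> ('a^7) set option.
      vec.span (T (fst (fst p)) (fst (snd (fst p))) \<union> (case snd p of None \<Rightarrow> snd (snd (fst p)) | Some X \<Rightarrow> X)))"
  define Sol where "Sol = {S. pg_solid S \<and> P2 \<subseteq> S \<and> (\<forall>i\<in>{1,2,3}. pg_meet S (E i))}"
  define D where "D = Trip \<inter> {t. deg t}"
  define ND where "ND = Trip \<inter> - {t. deg t}"

  have TripD: "pg_point B1 \<and> B1 \<subseteq> E 1 \<and> B1 \<noteq> P1 \<and> pg_point B2 \<and> B2 \<subseteq> E 2 \<and> B2 \<noteq> P1 \<and>
      pg_point B3 \<and> B3 \<subseteq> E 3 \<and> B3 \<noteq> P1" if "(B1,B2,B3) \<in> Trip" for B1 B2 B3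
    using that unfolding Trip_def Pts_def by auto
  have Tdim: "vec.subspace (T B1 B2) \<and> vec.dim (T B1 B2) = 3" if "(B1,B2,B3) \<in> Trip" for B1 B2 B3
    using G1[OF assms(1,2) sE1(1) sE2(1) I12 J12, of B1 B2] TripD[OF that] unfolding T_def by auto
  have Ccp: "vec.subspace (Cc t) \<and> T (fst t) (fst (snd t)) \<inter> Cc t = {0} \<and>
      vec.span (T (fst t) (fst (snd t)) \<union> Cc t) = UNIV" if "t \<in> Trip" for t
  proof -
    obtain B1 B2 B3 where t: "t = (B1,B2,B3)" by (cases t) auto
    have "vec.subspace (T B1 B2)" using Tdim that t by auto
    then show ?thesis unfolding Cc_def using someI_ex[OF complement_exists] t by simp
  qed
  have dimU: "vec.dim (UNIV :: ('a^7) set) = 7" by (simp add: card_cart_basis)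
  have Ccdim: "vec.dim (Cc t) = 4" if "t \<in> Trip" for t
  proof -
    obtain B1 B2 B3 where t: "t = (B1,B2,B3)" by (cases t) auto
    have tr: "(B1,B2,B3) \<in> Trip" using that t by simp
    have Tp: "vec.subspace (T B1 B2)" "vec.dim (T B1 B2) = 3" using Tdim[OF tr] by auto
    have Cp: "vec.subspace (Cc t)" "T B1 B2 \<inter> Cc t = {0}" "vec.span (T B1 B2 \<union> Cc t) = UNIV"
      using Ccp[OF that] t by auto
    have "vec.dim (vec.span (T B1 B2 \<union> Cc t)) = vec.dim (T B1 B2) + vec.dim (Cc t)"
      by (rule dim_join_disj[OF Tp(1) Cp(1,2)])
    then show ?thesis unfolding Cp(3) dimU Tp(2) by simp
  qed
  have ptsCc: "card (pts (Cc t)) = 1 + ?q + ?q^2 + ?q^3" if "t \<in> Trip" for t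
    using pts_card[of "Cc t"] Ccp[OF that] Ccdim[OF that] by (simp add: numeral_eq_Suc power_Suc)
  have cPts: "card (Pts i) = ?q^2 + ?q" if "i \<in> {1,2,3}" "P1 \<subseteq> E i" for i
  proof -
    have "Pts i = pts (E i) - {P1}" unfolding Pts_def pts_def by auto
    moreover have "P1 \<in> pts (E i)" using assms(1) that(2) unfolding pts_def by simp
    moreover have "card (pts (E i)) = 1 + ?q + ?q^2" using pts_card[OF sE(1)[OF that(1)]] sE(2)[OF that(1)]
      by (simp add: numeral_eq_Suc power_Suc)
    ultimately show ?thesis by (simp add: card_Diff_singleton power2_eq_square)
  qed
  have cTrip: "card Trip = (?q^2 + ?q)^3"
    unfolding Trip_def using cPts[OF _ P1E1] cPts[OF _ P1E2] cPts[OF _ P1E3]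
    by (simp add: card_cartesian_product power3_eq_cube)
  have cDND: "card D + card ND = card Trip"
  proof -
    have "card Trip = card (D \<union> ND)" unfolding D_def ND_def by (rule arg_cong[where f=card]) auto
    also have "\<dots> = card D + card ND" by (rule card_Un_disjoint) (auto simp: D_def ND_def)
    finally show ?thesis by simp
  qed
  have cTgt: "card Tgt = card D * (1 + ?q + ?q^2 + ?q^3) + card ND"
  proof -
    have "card Tgt = (\<Sum>t\<in>Trip. card (if deg t then Some ` pts (Cc t) else {None}))"
      unfolding Tgt_def by (rule card_SigmaI) auto
    also have "\<dots> = (\<Sum>t\<in>Trip. if deg t then 1 + ?q + ?q^2 + ?q^3 else 1)"
      by (rule sum.cong[OF refl]) (simp add: cSome ptsCc)
    also have "\<dots> = card D * (1 + ?q + ?q^2 + ?q^3) + card ND"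
      unfolding D_def ND_def by (simp add: sum.If_cases)
    finally show ?thesis .
  qed
  define W where "W = (\<lambda>B3. E 1 \<inter> vec.span (P2 \<union> vec.span (B3 \<union> E 2)))"
  have cD: "card D \<le> ?q^3 + ?q^2"
  proof -
    let ?h = "\<lambda>t::('a^7) set \<times> ('a^7) set \<times> ('a^7) set. (snd (snd t), fst t)"
    have inj: "inj_on ?h D"
    proof (rule inj_onI)
      fix t t' assume tt: "t \<in> D" "t' \<in> D" "?h t = ?h t'"
      obtain B1 B2 B3 where t: "t = (B1,B2,B3)" by (cases t) auto
      obtain B1' B2' B3' where t': "t' = (B1',B2',B3')" by (cases t') auto
      have e: "B1' = B1" "B3' = B3" using tt(3) t t' by auto
      have tr: "(B1,B2,B3) \<in> Trip" "(B1,B2',B3) \<in> Trip" using tt t t' e unfolding D_def by auto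
      have dg: "B3 \<subseteq> vec.span (P2 \<union> vec.span (B1 \<union> B2))" "B3 \<subseteq> vec.span (P2 \<union> vec.span (B1 \<union> B2'))"
        using tt t t' e unfolding D_def deg_def T_def by auto
      have "B2 = B2'"
        using Dinj[OF assms(1,2) sE1(1) sE2(1) sE3(1) I12 I13 J12 J13 _ _ _ _ _ _ _ _ _ _ _ _ dg]
          TripD[OF tr(1)] TripD[OF tr(2)] by blast
      then show "t = t'" using t t' e by simp
    qed
    have img: "?h ` D \<subseteq> Sigma (Pts 3) (\<lambda>B3. pts (W B3) - {P1})"
    proof
      fix p assume "p \<in> ?h ` D"
      then obtain t where tD: "t \<in> D" and p: "p = ?h t" by blast
      obtain B1 B2 B3 where t: "t = (B1,B2,B3)" by (cases t) auto
      have tr: "(B1,B2,B3) \<in> Trip" using tD t unfolding D_def by auto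
      have dg: "B3 \<subseteq> vec.span (P2 \<union> vec.span (B1 \<union> B2))" using tD t unfolding D_def deg_def T_def by auto
      have d: "vec.dim (vec.span (P2 \<union> vec.span (B1 \<union> B2))) = 3" using Tdim[OF tr] unfolding T_def by simp
      have B: "pg_point B1" "B1 \<subseteq> E 1" "B1 \<noteq> P1" "pg_point B2" "B2 \<subseteq> E 2" "B2 \<noteq> P1"
        "pg_point B3" "B3 \<subseteq> E 3" "B3 \<noteq> P1" using TripD[OF tr] by auto
      have "B1 \<subseteq> vec.span (P2 \<union> vec.span (B3 \<union> E 2))"
        by (rule Dimg[OF assms(1,2) sE2(1) sE3(1) I23 J23 B(4,5,6) B(7,8,9) d dg])
      then have "B1 \<in> pts (W B3) - {P1}" using B(1,2,3) unfolding pts_def W_def by auto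
      moreover have "B3 \<in> Pts 3" using tr unfolding Trip_def by auto
      ultimately show "p \<in> Sigma (Pts 3) (\<lambda>B3. pts (W B3) - {P1})" using p t by simp
    qed
    have cW: "card (pts (W B3) - {P1}) \<le> ?q" if "B3 \<in> Pts 3" for B3
    proof -
      have pB3: "pg_point B3" using that unfolding Pts_def by simp
      have wb: "vec.dim (W B3) \<le> 2" "P1 \<subseteq> W B3"
        using Wbound[OF assms(1,2) sE1(1) sE2(1) sE1(2) sE2(2) I12 J12 pB3] unfolding W_def by auto
      have sW: "vec.subspace (W B3)" unfolding W_def by (rule vec.subspace_inter[OF sE1(1) vec.subspace_span])
      have "card (pts (W B3)) = (\<Sum>i<vec.dim (W B3). ?q^i)" by (rule pts_card[OF sW])
      also have "\<dots> \<le> (\<Sum>i<2. ?q^i)" by (rule sum_mono2) (use wb in auto)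
      finally have "card (pts (W B3)) \<le> 1 + ?q" by (simp add: numeral_2_eq_2)
      moreover have "P1 \<in> pts (W B3)" using assms(1) wb(2) unfolding pts_def by simp
      ultimately show ?thesis by (simp add: card_Diff_singleton)
    qed
    have "card D = card (?h ` D)" by (rule card_image[OF inj, symmetric])
    also have "\<dots> \<le> card (Sigma (Pts 3) (\<lambda>B3. pts (W B3) - {P1}))" by (rule card_mono[OF _ img]) simp
    also have "\<dots> = (\<Sum>B3\<in>Pts 3. card (pts (W B3) - {P1}))" by (rule card_SigmaI) auto
    also have "\<dots> \<le> (\<Sum>B3\<in>Pts 3. ?q)" by (rule sum_mono) (rule cW)
    also have "\<dots> = (?q^2 + ?q) * ?q" using cPts[OF _ P1E3] by simp
    finally show ?thesis by (simp add: algebra_simps power2_eq_square power3_eq_cube)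
  qed
  define SolI where "SolI = {S\<in>Sol. P1 \<subseteq> S}"
  define SolII where "SolII = {S\<in>Sol. \<not> P1 \<subseteq> S}"
  have SolU: "Sol = SolI \<union> SolII" unfolding SolI_def SolII_def by auto
  have solD: "vec.subspace S \<and> vec.dim S = 4 \<and> P2 \<subseteq> S \<and> (\<forall>i\<in>{1,2,3}. pg_meet S (E i))" if "S \<in> Sol" for S
    using that unfolding Sol_def proj_subspace_def by auto
  have cI: "card SolI \<le> ?q^6 + ?q^5 + 2*?q^4 + 2*?q^3 + 2*?q^2 + ?q + 1"
  proof -
    let ?L = "vec.span (P1 \<union> P2)"
    have L: "vec.subspace ?L" "vec.dim ?L = 2" using join_points_line[OF assms(1,2,3)] by auto
    obtain C where C: "vec.subspace C" "?L \<inter> C = {0}" "vec.span (?L \<union> C) = UNIV"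
      using complement_exists[OF L(1)] by blast
    have "vec.dim (vec.span (?L \<union> C)) = vec.dim ?L + vec.dim C" by (rule dim_join_disj[OF L(1) C(1,2)])
    then have dC: "vec.dim C = 5" unfolding C(3) dimU L(2) by simp
    have "SolI \<subseteq> (\<lambda>X. vec.span (?L \<union> X)) ` lns C"
    proof
      fix S assume S: "S \<in> SolI"
      have sS: "vec.subspace S" "vec.dim S = 4" "P2 \<subseteq> S" "P1 \<subseteq> S" using S solD unfolding SolI_def by auto
      have LS: "?L \<subseteq> S" using sS by (intro vec.span_minimal) auto
      have e: "S = vec.span (?L \<union> (S \<inter> C))" "vec.dim ?L + vec.dim (S \<inter> C) = vec.dim S"
        using complement_decomp[OF L(1) C sS(1) LS] by auto
      have "S \<inter> C \<in> lns C" unfolding lns_def using e(2) L(2) sS(2) vec.subspace_inter[OF sS(1) C(1)] by auto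
      then show "S \<in> (\<lambda>X. vec.span (?L \<union> X)) ` lns C" using e(1) by blast
    qed
    then have "card SolI \<le> card (lns C)" by (meson card_image_le finite order_trans card_mono)
    then show ?thesis using lns_card5[OF C(1) dC] by simp
  qed
  have cII: "card SolII \<le> card Tgt"
  proof -
    have "SolII \<subseteq> g ` Tgt"
    proof
      fix S assume S: "S \<in> SolII"
      have sS: "vec.subspace S" "vec.dim S = 4" "P2 \<subseteq> S" "\<not> P1 \<subseteq> S"
        using S solD unfolding SolII_def by auto
      have meet: "pg_meet S (E i)" if "i \<in> {1,2,3}" for i using S solD that unfolding SolII_def by auto
      obtain B1 where B1: "pg_point B1" "B1 \<subseteq> S" "B1 \<subseteq> E 1" "B1 \<noteq> P1"
        using getpt[OF sS(1) sE1(1) meet[of 1] sS(4)] by auto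
      obtain B2 where B2: "pg_point B2" "B2 \<subseteq> S" "B2 \<subseteq> E 2" "B2 \<noteq> P1"
        using getpt[OF sS(1) sE2(1) meet[of 2] sS(4)] by auto
      obtain B3 where B3: "pg_point B3" "B3 \<subseteq> S" "B3 \<subseteq> E 3" "B3 \<noteq> P1"
        using getpt[OF sS(1) sE3(1) meet[of 3] sS(4)] by auto
      have TS: "T C1 C2 \<subseteq> S" if "C1 \<subseteq> S" "C2 \<subseteq> S" for C1 C2
      proof -
        have "vec.span (C1 \<union> C2) \<subseteq> S" using that sS(1) by (intro vec.span_minimal) auto
        then show ?thesis unfolding T_def using sS(1,3) by (intro vec.span_minimal) auto
      qed
      show "S \<in> g ` Tgt"
      proof (cases "\<exists>t\<in>Trip. fst t \<subseteq> S \<and> fst (snd t) \<subseteq> S \<and> snd (snd t) \<subseteq> S \<and> \<not> deg t")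
        case True
        then obtain C1 C2 C3 where c: "(C1,C2,C3) \<in> Trip" "C1 \<subseteq> S" "C2 \<subseteq> S" "C3 \<subseteq> S" "\<not> deg (C1,C2,C3)"
          by auto
        have "vec.span (T C1 C2 \<union> C3) = S"
          by (rule nondeg_eq[OF sS(1,2)]) (use Tdim[OF c(1)] TS[OF c(2,3)] TripD[OF c(1)] c(4,5) in \<open>auto simp: deg_def\<close>)
        moreover have "((C1,C2,C3), None) \<in> Tgt" using c(1,5) unfolding Tgt_def by simp
        ultimately show ?thesis unfolding g_def by force
      next
        case False
        have tr: "(B1,B2,B3) \<in> Trip" using B1 B2 B3 unfolding Trip_def Pts_def by auto
        then have dg: "deg (B1,B2,B3)" using False B1(2) B2(2) B3(2) by auto
        let ?C = "Cc (B1,B2,B3)"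
        have Cp: "vec.subspace ?C" "T B1 B2 \<inter> ?C = {0}" "vec.span (T B1 B2 \<union> ?C) = UNIV"
          using Ccp[OF tr] by auto
        have e: "S = vec.span (T B1 B2 \<union> (S \<inter> ?C))" "vec.dim (T B1 B2) + vec.dim (S \<inter> ?C) = vec.dim S"
          using complement_decomp[OF _ Cp sS(1) TS[OF B1(2) B2(2)]] Tdim[OF tr] by auto
        have "S \<inter> ?C \<in> pts ?C" unfolding pts_def proj_subspace_def
          using e(2) Tdim[OF tr] sS(2) vec.subspace_inter[OF sS(1) Cp(1)] by auto
        then have "((B1,B2,B3), Some (S \<inter> ?C)) \<in> Tgt" using tr dg unfolding Tgt_def by simp
        moreover have "g ((B1,B2,B3), Some (S \<inter> ?C)) = S" unfolding g_def using e(1) by simp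
        ultimately show ?thesis by force
      qed
    qed
    then show ?thesis by (meson card_image_le finite order_trans card_mono)
  qed
  have "card Sol \<le> card SolI + card SolII" unfolding SolU by (rule card_Un_le)
  also have "\<dots> \<le> (?q^6 + ?q^5 + 2*?q^4 + 2*?q^3 + 2*?q^2 + ?q + 1) + (card D * (1 + ?q + ?q^2 + ?q^3) + card ND)"
    using cI cII cTgt by linarith
  also have "\<dots> \<le> 3 * ?q^6 + 6 * ?q^5 + 7 * ?q^4 + 4 * ?q^3 + 2 * ?q^2 + ?q + 1"
  proof -
    have a: "card D * (1 + ?q + ?q^2 + ?q^3) = card D + card D * (?q + ?q^2 + ?q^3)" by (simp add: algebra_simps)
    have b: "card D * (?q + ?q^2 + ?q^3) \<le> (?q^3 + ?q^2) * (?q + ?q^2 + ?q^3)" by (rule mult_right_mono[OF cD]) simp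
    have c: "(?q^6 + ?q^5 + 2*?q^4 + 2*?q^3 + 2*?q^2 + ?q + 1) + ((?q^2 + ?q)^3 + (?q^3 + ?q^2) * (?q + ?q^2 + ?q^3))
        = 3 * ?q^6 + 6 * ?q^5 + 7 * ?q^4 + 4 * ?q^3 + 2 * ?q^2 + ?q + 1" by algebra
    show ?thesis using a b c cDND cTrip by linarith
  qed
  finally show ?thesis unfolding Sol_def .
qed

end
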